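(* The typical subranks of real $3\times4\times4$ tensors are exactly $2$ and $3$.
   Context: For $r \geq 0$ let $I_r := \sum_{j=1}^r e_j \otimes e_j \otimes e_j$. The subrank of $T \in \mathbb{R}^{n_1} \otimes \mathbb{R}^{n_2} \otimes \mathbb{R}^{n_3}$ is $Q(T) := \max\{ r \mid \exists\ \mathbb{R}\text{-linear } \varphi_i : \mathbb{R}^{n_i} \to \mathbb{R}^r,\ (\varphi_1 \otimes \varphi_2 \otimes \varphi_3) T = I_r\}$. An integer $r$ is a typical subrank of the format $n_1\times n_2\times n_3$ if $\{T \mid Q(T) = r\}$ contains a nonempty Euclidean-open subset of $\mathbb{R}^{n_1} \otimes \mathbb{R}^{n_2} \otimes \mathbb{R}^{n_3}$. *)

theory Defs
  imports "HOL-Analysis.Analysis"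
begin

text \<open>A tensor in R^n1 (x) R^n2 (x) R^n3 is an element of real^'c^'b^'a with
  CARD('a) = n1, CARD('b) = n2, CARD('c) = n3; its entries are T$a$b$c.
  A linear map R^ni -> R^r is given by its r x ni matrix, a function
  nat => 'a => real whose rows with index < r are used.
  (phi1 (x) phi2 (x) phi3) T = I_r is written out entrywise.\<close>

definition restricts_to_unit :: "nat \<Rightarrow> real^'c^'b^'a \<Rightarrow> bool" where
  "restricts_to_unit r T \<longleftrightarrow>
     (\<exists>(A :: nat \<Rightarrow> 'a \<Rightarrow> real) (B :: nat \<Rightarrow> 'b \<Rightarrow> real) (C :: nat \<Rightarrow> 'c \<Rightarrow> real).
        \<forall>i<r. \<forall>j<r. \<forall>k<r.
          (\<Sum>a\<in>UNIV. \<Sum>b\<in>UNIV. \<Sum>c\<in>UNIV. A i a * B j b * C k c * T$a$b$c)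
            = (if i = j \<and> j = k then 1 else 0))"

definition subrank :: "real^'c^'b^'a \<Rightarrow> nat" where
  "subrank T = Max {r. restricts_to_unit r T}"

definition typical_subrank :: "(real^'c^'b^'a) itself \<Rightarrow> nat \<Rightarrow> bool" where
  "typical_subrank _ r \<longleftrightarrow>
     (\<exists>S :: (real^'c^'b^'a) set. open S \<and> S \<noteq> {} \<and> (\<forall>T\<in>S. subrank T = r))"

end

theory Submission
  imports Defs "HOL-Computational_Algebra.Polynomial"
begin

lemma restricts_mono:
  assumes "restricts_to_unit r T" "r' \<le> r" shows "restricts_to_unit r' T"
proof -
  obtain A B C where H: "\<forall>i<r. \<forall>j<r. \<forall>k<r.
          (\<Sum>a\<in>UNIV. \<Sum>b\<in>UNIV. \<Sum>c\<in>UNIV. A i a * B j b * C k c * T$a$b$c)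
            = (if i = j \<and> j = k then 1 else 0)"
    using assms(1) unfolding restricts_to_unit_def by blast
  show ?thesis unfolding restricts_to_unit_def
    by (rule exI[of _ A], rule exI[of _ B], rule exI[of _ C]) (use H assms(2) in simp)
qed

lemma restricts_0: "restricts_to_unit 0 T"
  unfolding restricts_to_unit_def by auto

definition f4 :: "4 \<Rightarrow> nat" where "f4 i = (if i = 0 then 0 else if i = 1 then 1 else if i = 2 then 2 else 3)"

lemma f4_inj: "f4 i = f4 j \<Longrightarrow> i = j"
  using exhaust_4[of i] exhaust_4[of j] by (auto simp: f4_def)

lemma f4_lt: "f4 i < 4" by (simp add: f4_def)

lemma not_restricts_4:
  fixes T :: "real^'c^'b^'a"
  assumes "CARD('a) < 4"
  shows "\<not> restricts_to_unit 4 T"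
proof
  assume "restricts_to_unit 4 T"
  then obtain A B C where H: "\<forall>i<(4::nat). \<forall>j<(4::nat). \<forall>k<(4::nat).
          (\<Sum>a\<in>UNIV. \<Sum>b\<in>UNIV. \<Sum>c\<in>UNIV. A i a * B j b * C k c * T$a$b$c)
            = (if i = j \<and> j = k then 1 else 0)"
    unfolding restricts_to_unit_def by blast
  define K :: "real^4^'a" where "K = (\<chi> a i. A (f4 i) a)"
  have "rank K \<le> CARD('a)" using rank_bound[of K] by simp
  then have "rank K \<noteq> CARD(4)" using assms by simp
  then obtain l :: "real^4" where l: "l \<noteq> 0" "K *v l = 0"
    using matrix_nonfull_linear_equations_eq by blast
  have Kl: "(\<Sum>i\<in>UNIV. l$i * A (f4 i) a) = 0" for a
  proof -
    have "(K *v l) $ a = 0" using l by simp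
    then show ?thesis by (simp add: K_def matrix_vector_mult_def mult.commute)
  qed
  have "l $ i0 = 0" for i0
  proof -
    define N where "N a = (\<Sum>b\<in>UNIV. \<Sum>c\<in>UNIV. B (f4 i0) b * C (f4 i0) c * T$a$b$c)" for a
    have e: "(\<Sum>a\<in>UNIV. A i a * N a) = (if i = f4 i0 then 1 else 0)" if "i < 4" for i
    proof -
      have "(\<Sum>a\<in>UNIV. A i a * N a) = (\<Sum>a\<in>UNIV. \<Sum>b\<in>UNIV. \<Sum>c\<in>UNIV. A i a * B (f4 i0) b * C (f4 i0) c * T$a$b$c)"
        by (simp add: N_def sum_distrib_left mult.assoc)
      also have "\<dots> = (if i = f4 i0 then 1 else 0)" using H that f4_lt[of i0] by simp
      finally show ?thesis .
    qed
    have "(\<Sum>i\<in>UNIV. l$i * (\<Sum>a\<in>UNIV. A (f4 i) a * N a)) = (\<Sum>i\<in>UNIV. \<Sum>a\<in>UNIV. l$i * A (f4 i) a * N a)"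
      by (simp add: sum_distrib_left mult.assoc)
    also have "\<dots> = (\<Sum>a\<in>UNIV. \<Sum>i\<in>UNIV. l$i * A (f4 i) a * N a)" by (rule sum.swap)
    also have "\<dots> = (\<Sum>a\<in>UNIV. (\<Sum>i\<in>UNIV. l$i * A (f4 i) a) * N a)"
      by (simp add: sum_distrib_right)
    also have "\<dots> = 0" using Kl by simp
    finally have z: "(\<Sum>i\<in>UNIV. l$i * (\<Sum>a\<in>UNIV. A (f4 i) a * N a)) = 0" .
    have "(\<Sum>i\<in>UNIV. l$i * (\<Sum>a\<in>UNIV. A (f4 i) a * N a)) = (\<Sum>i\<in>UNIV. l$i * (if i = i0 then 1 else 0))"
      using e f4_lt f4_inj by (intro sum.cong) auto
    also have "\<dots> = l $ i0" by (simp add: if_distrib cong: if_cong)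
    finally show ?thesis using z by simp
  qed
  then have "l = 0" by (simp add: vec_eq_iff)
  then show False using l by simp
qed

definition det3 :: "real \<Rightarrow> real \<Rightarrow> real \<Rightarrow> real \<Rightarrow> real \<Rightarrow> real \<Rightarrow> real \<Rightarrow> real \<Rightarrow> real \<Rightarrow> real" where
  "det3 a1 a2 a3 b1 b2 b3 c1 c2 c3 = a1*(b2*c3 - b3*c2) - a2*(b1*c3 - b3*c1) + a3*(b1*c2 - b2*c1)"

definition cross4 :: "real^4 \<Rightarrow> real^4 \<Rightarrow> real^4 \<Rightarrow> real^4" where
  "cross4 x y z = (\<chi> i. if i = 1 then det3 (x$2) (x$3) (x$4) (y$2) (y$3) (y$4) (z$2) (z$3) (z$4)
     else if i = 2 then - det3 (x$1) (x$3) (x$4) (y$1) (y$3) (y$4) (z$1) (z$3) (z$4)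
     else if i = 3 then det3 (x$1) (x$2) (x$4) (y$1) (y$2) (y$4) (z$1) (z$2) (z$4)
     else - det3 (x$1) (x$2) (x$3) (y$1) (y$2) (y$3) (z$1) (z$2) (z$3))"

lemma cross4_components:
  "cross4 x y z $ 1 = det3 (x$2) (x$3) (x$4) (y$2) (y$3) (y$4) (z$2) (z$3) (z$4)"
  "cross4 x y z $ 2 = - det3 (x$1) (x$3) (x$4) (y$1) (y$3) (y$4) (z$1) (z$3) (z$4)"
  "cross4 x y z $ 3 = det3 (x$1) (x$2) (x$4) (y$1) (y$2) (y$4) (z$1) (z$2) (z$4)"
  "cross4 x y z $ 4 = - det3 (x$1) (x$2) (x$3) (y$1) (y$2) (y$3) (z$1) (z$2) (z$3)"
  by (simp_all add: cross4_def)

lemma cross4_orth: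
  "(\<Sum>i\<in>UNIV. x$i * cross4 x y z $ i) = 0"
  "(\<Sum>i\<in>UNIV. y$i * cross4 x y z $ i) = 0"
  "(\<Sum>i\<in>UNIV. z$i * cross4 x y z $ i) = 0"
  by (simp_all add: sum_4 cross4_components det3_def algebra_simps)

type_synonym tens = "real^4^4^3"

definition colv :: "tens \<Rightarrow> 3 \<Rightarrow> real^4" where "colv T a = (\<chi> b. T$a$b$4)"
definition bb1 :: "tens \<Rightarrow> real^4" where "bb1 T = cross4 (colv T 1) (colv T 2) (colv T 3)"
definition cc1 :: "tens \<Rightarrow> real^4" where "cc1 T = cross4 (T$1$4) (T$2$4) (T$3$4)"
definition uu :: "tens \<Rightarrow> 3 \<Rightarrow> real" where
  "uu T a = (\<Sum>b\<in>UNIV. \<Sum>c\<in>UNIV. bb1 T $ b * T$a$b$c * cc1 T $ c)"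
definition vv :: "tens \<Rightarrow> 3 \<Rightarrow> real" where "vv T a = T$a$4$4"
definition DD :: "tens \<Rightarrow> real" where "DD T = uu T 1 * vv T 2 - uu T 2 * vv T 1"

lemma bb1_orth: "(\<Sum>b\<in>UNIV. bb1 T $ b * T$a$b$4) = 0"
proof -
  have "(\<Sum>b\<in>UNIV. colv T a $ b * bb1 T $ b) = 0"
    using exhaust_3[of a] cross4_orth[where x="colv T 1" and y="colv T 2" and z="colv T 3"] by (auto simp: bb1_def)
  then show ?thesis by (simp add: colv_def mult.commute)
qed

lemma cc1_orth: "(\<Sum>c\<in>UNIV. T$a$4$c * cc1 T $ c) = 0"
  using exhaust_3[of a] cross4_orth[where x="T$1$4" and y="T$2$4" and z="T$3$4"] by (auto simp: cc1_def)

lemma sum_delta_r: fixes f :: "'n::finite \<Rightarrow> real" shows "(\<Sum>c\<in>UNIV. f c * (if c = x then 1 else 0)) = (f x::real)"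
  by (simp add: if_distrib sum.delta cong: if_cong)

lemma sum_delta_l: fixes f :: "'n::finite \<Rightarrow> real" shows "(\<Sum>c\<in>UNIV. (if c = x then 1 else 0) * f c) = (f x::real)"
  using sum_delta_r[of f x] by (simp add: mult.commute)

lemma restricts2:
  fixes T :: tens
  assumes D: "DD T \<noteq> 0"
  shows "restricts_to_unit 2 T"
proof -
  define B :: "nat \<Rightarrow> 4 \<Rightarrow> real" where "B j b = (if j = 0 then bb1 T $ b else if b = 4 then 1 else 0)" for j b
  define C :: "nat \<Rightarrow> 4 \<Rightarrow> real" where "C k c = (if k = 0 then cc1 T $ c else if c = 4 then 1 else 0)" for k c
  define A :: "nat \<Rightarrow> 3 \<Rightarrow> real" where "A i a = (if i = 0 then (if a = 1 then vv T 2 / DD T else if a = 2 then - vv T 1 / DD T else 0)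
     else (if a = 1 then - uu T 2 / DD T else if a = 2 then uu T 1 / DD T else 0))" for i a
  define N where "N a j k = (\<Sum>b\<in>UNIV. \<Sum>c\<in>UNIV. B j b * C k c * T$a$b$c)" for a j k
  have N00: "N a 0 0 = uu T a" for a
    by (simp add: N_def B_def C_def uu_def mult.commute mult.left_commute)
  have Ck: "C k = (\<lambda>c. if c = 4 then 1 else 0)" if "k \<noteq> 0" for k
    using that by (auto simp: C_def)
  have Bj: "B j = (\<lambda>c. if c = 4 then 1 else 0)" if "j \<noteq> 0" for j
    using that by (auto simp: B_def)
  have N01: "N a 0 k = 0" if "k \<noteq> 0" for a k
  proof -
    have "N a 0 k = (\<Sum>b\<in>UNIV. \<Sum>c\<in>UNIV. (bb1 T $ b * T$a$b$c) * (if c = 4 then 1 else 0))"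
      unfolding N_def Ck[OF that] by (simp add: B_def mult_ac)
    also have "\<dots> = (\<Sum>b\<in>UNIV. bb1 T $ b * T$a$b$4)" by (simp only: sum_delta_r)
    finally show ?thesis using bb1_orth by simp
  qed
  have N10: "N a j 0 = 0" if "j \<noteq> 0" for a j
  proof -
    have "N a j 0 = (\<Sum>b\<in>UNIV. (if b = 4 then 1 else 0) * (\<Sum>c\<in>UNIV. T$a$b$c * cc1 T $ c))"
      unfolding N_def Bj[OF that] by (simp add: C_def mult_ac sum_distrib_left)
    also have "\<dots> = (\<Sum>c\<in>UNIV. T$a$4$c * cc1 T $ c)" by (simp only: sum_delta_l)
    finally show ?thesis using cc1_orth by simp
  qed
  have N11: "N a j k = vv T a" if "j \<noteq> 0" "k \<noteq> 0" for a j k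
  proof -
    have "N a j k = (\<Sum>b\<in>UNIV. (if b = 4 then 1 else 0) * (\<Sum>c\<in>UNIV. T$a$b$c * (if c = 4 then 1 else 0)))"
      unfolding N_def Bj[OF that(1)] Ck[OF that(2)] by (simp add: mult_ac sum_distrib_left)
    also have "\<dots> = T$a$4$4" by (simp only: sum_delta_l sum_delta_r)
    finally show ?thesis by (simp add: vv_def)
  qed
  have E: "(\<Sum>a\<in>UNIV. \<Sum>b\<in>UNIV. \<Sum>c\<in>UNIV. A i a * B j b * C k c * T$a$b$c) = (\<Sum>a\<in>UNIV. A i a * N a j k)" for i j k
    by (simp add: N_def sum_distrib_left mult.assoc)
  have "\<forall>i<2. \<forall>j<2. \<forall>k<2. (\<Sum>a\<in>UNIV. A i a * N a j k) = (if i = j \<and> j = k then 1 else 0)"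
  proof (intro allI impI)
    fix i j k :: nat assume "i < 2" "j < 2" "k < 2"
    then have "i = 0 \<or> i = 1" "j = 0 \<or> j = 1" "k = 0 \<or> k = 1" by auto
    then show "(\<Sum>a\<in>UNIV. A i a * N a j k) = (if i = j \<and> j = k then 1 else 0)"
    proof -
      have h1: "vv T 2 / DD T * uu T 1 + - vv T 1 / DD T * uu T 2 = 1"
      proof -
        have "vv T 2 / DD T * uu T 1 + - vv T 1 / DD T * uu T 2 = (uu T 1 * vv T 2 - uu T 2 * vv T 1) / DD T"
          using D by (simp add: field_simps)
        then show ?thesis using D by (simp add: DD_def)
      qed
      have h2: "- uu T 2 / DD T * vv T 1 + uu T 1 / DD T * vv T 2 = 1"
      proof -
        have "- uu T 2 / DD T * vv T 1 + uu T 1 / DD T * vv T 2 = (uu T 1 * vv T 2 - uu T 2 * vv T 1) / DD T"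
          using D by (simp add: field_simps)
        then show ?thesis using D by (simp add: DD_def)
      qed
      have h3: "vv T 2 / DD T * vv T 1 + - vv T 1 / DD T * vv T 2 = 0" "- uu T 2 / DD T * uu T 1 + uu T 1 / DD T * uu T 2 = 0"
        by (simp_all add: field_simps)
      have h4: "vv T 2 * uu T 1 / DD T - vv T 1 * uu T 2 / DD T = 1"
               "uu T 1 * vv T 2 / DD T - uu T 2 * vv T 1 / DD T = 1"
      proof -
        have e1: "vv T 2 * uu T 1 - vv T 1 * uu T 2 = DD T" "uu T 1 * vv T 2 - uu T 2 * vv T 1 = DD T"
          by (simp_all add: DD_def mult_ac)
        show "vv T 2 * uu T 1 / DD T - vv T 1 * uu T 2 / DD T = 1"
          by (subst diff_divide_distrib[symmetric], subst e1(1), simp add: D)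
        show "uu T 1 * vv T 2 / DD T - uu T 2 * vv T 1 / DD T = 1"
          by (subst diff_divide_distrib[symmetric], subst e1(2), simp add: D)
      qed
      show ?thesis using \<open>i = 0 \<or> i = 1\<close> \<open>j = 0 \<or> j = 1\<close> \<open>k = 0 \<or> k = 1\<close>
        by (auto simp: sum_3 N00 N01 N10 N11 A_def h4)
    qed
  qed
  then show ?thesis unfolding restricts_to_unit_def
    by (intro exI[of _ A] exI[of _ B] exI[of _ C]) (simp only: E)
qed

lemma inner_sum4: "(x::real^'n) \<bullet> y = (\<Sum>i\<in>UNIV. x$i * y$i)"
  by (simp add: inner_vec_def)

lemma restricts3_singular:
  fixes T :: "real^4^4^'a"
  assumes "restricts_to_unit 3 T"
  shows "\<exists>x::real^'a. \<exists>w::real^4. x \<noteq> 0 \<and> w \<noteq> 0 \<and> (\<chi> b c. \<Sum>a\<in>UNIV. x$a * T$a$b$c) *v w = 0"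
proof -
  obtain A B C where H: "\<forall>i<(3::nat). \<forall>j<(3::nat). \<forall>k<(3::nat).
          (\<Sum>a\<in>UNIV. \<Sum>b\<in>UNIV. \<Sum>c\<in>UNIV. A i a * B j b * C k c * T$a$b$c)
            = (if i = j \<and> j = k then 1 else 0)"
    using assms unfolding restricts_to_unit_def by blast
  define ent where "ent i j k = (\<Sum>a\<in>UNIV. \<Sum>b\<in>UNIV. \<Sum>c\<in>UNIV. A i a * B j b * C k c * T$a$b$c)" for i j k
  have ent: "ent i j k = (if i = j \<and> j = k then 1 else 0)" if "i < 3" "j < 3" "k < 3" for i j k
    using H that by (simp add: ent_def)
  define x :: "real^'a" where "x = (\<chi> a. A 0 a)"
  define M :: "real^4^4" where "M = (\<chi> b c. \<Sum>a\<in>UNIV. x$a * T$a$b$c)"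
  define cv where "cv k = ((\<chi> c. C k c) :: real^4)" for k
  define bv where "bv j = ((\<chi> b. B j b) :: real^4)" for j
  define u where "u k = M *v cv k" for k
  have bu: "bv j \<bullet> u k = ent 0 j k" for j k
  proof -
    have "bv j \<bullet> u k = (\<Sum>b\<in>UNIV. B j b * (\<Sum>c\<in>UNIV. (\<Sum>a\<in>UNIV. A 0 a * T$a$b$c) * C k c))"
      by (simp add: inner_sum4 bv_def u_def M_def matrix_vector_mult_def cv_def x_def)
    also have "\<dots> = (\<Sum>b\<in>UNIV. \<Sum>c\<in>UNIV. \<Sum>a\<in>UNIV. A 0 a * B j b * C k c * T$a$b$c)"
      by (simp add: sum_distrib_left sum_distrib_right mult_ac)
    also have "\<dots> = (\<Sum>b\<in>UNIV. \<Sum>a\<in>UNIV. \<Sum>c\<in>UNIV. A 0 a * B j b * C k c * T$a$b$c)"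
      by (rule sum.cong[OF refl], rule sum.swap)
    also have "\<dots> = ent 0 j k" unfolding ent_def by (rule sum.swap)
    finally show ?thesis .
  qed
  have bu0: "bv j \<bullet> u k = 0" if "j = 1 \<or> j = 2" "k < 3" for j k
    using bu[of j k] ent[of 0 j k] that by auto
  have Ic: "z0 = 0 \<and> z1 = 0 \<and> z2 = 0" if "z0 *\<^sub>R cv 0 + z1 *\<^sub>R cv 1 + z2 *\<^sub>R cv 2 = 0" for z0 z1 z2
  proof -
    have "ent i i k = (\<chi> c. \<Sum>a\<in>UNIV. \<Sum>b\<in>UNIV. A i a * B i b * T$a$b$c) \<bullet> cv k" for i k
    proof -
      have "ent i i k = (\<Sum>a\<in>UNIV. \<Sum>c\<in>UNIV. \<Sum>b\<in>UNIV. A i a * B i b * C k c * T$a$b$c)"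
        unfolding ent_def by (rule sum.cong[OF refl], rule sum.swap)
      also have "\<dots> = (\<Sum>c\<in>UNIV. \<Sum>a\<in>UNIV. \<Sum>b\<in>UNIV. A i a * B i b * C k c * T$a$b$c)"
        by (rule sum.swap)
      also have "\<dots> = (\<chi> c. \<Sum>a\<in>UNIV. \<Sum>b\<in>UNIV. A i a * B i b * T$a$b$c) \<bullet> cv k"
        by (simp add: inner_sum4 cv_def sum_distrib_left sum_distrib_right mult_ac)
      finally show ?thesis .
    qed
    then have "z0 * ent i i 0 + z1 * ent i i 1 + z2 * ent i i 2 = 0" for i
      using arg_cong[OF that, of "\<lambda>v. (\<chi> c. \<Sum>a\<in>UNIV. \<Sum>b\<in>UNIV. A i a * B i b * T$a$b$c) \<bullet> v"]
      by (simp add: inner_add_right)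
    from this[of 0] this[of 1] this[of 2] show ?thesis by (simp add: ent)
  qed
  have Ib: "z1 = 0 \<and> z2 = 0" if "z1 *\<^sub>R bv 1 + z2 *\<^sub>R bv 2 = 0" for z1 z2
  proof -
    have "ent i j i = (\<chi> b. \<Sum>a\<in>UNIV. \<Sum>c\<in>UNIV. A i a * C i c * T$a$b$c) \<bullet> bv j" for i j
    proof -
      have "ent i j i = (\<Sum>b\<in>UNIV. \<Sum>a\<in>UNIV. \<Sum>c\<in>UNIV. A i a * B j b * C i c * T$a$b$c)"
        unfolding ent_def by (rule sum.swap)
      also have "\<dots> = (\<chi> b. \<Sum>a\<in>UNIV. \<Sum>c\<in>UNIV. A i a * C i c * T$a$b$c) \<bullet> bv j"
        by (simp add: inner_sum4 bv_def sum_distrib_left sum_distrib_right mult_ac)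
      finally show ?thesis .
    qed
    then have "z1 * ent i 1 i + z2 * ent i 2 i = 0" for i
      using arg_cong[OF that, of "\<lambda>v. (\<chi> b. \<Sum>a\<in>UNIV. \<Sum>c\<in>UNIV. A i a * C i c * T$a$b$c) \<bullet> v"]
      by (simp add: inner_add_right)
    from this[of 1] this[of 2] show ?thesis by (simp add: ent)
  qed
  define w1 where "w1 = bv 1"
  define w2 where "w2 = bv 2"
  have w1nz: "w1 \<noteq> 0" using Ib[of 1 0] by (auto simp: w1_def)
  define y where "y = (w1 \<bullet> w1) *\<^sub>R w2 - (w1 \<bullet> w2) *\<^sub>R w1"
  have ynz: "y \<noteq> 0"
  proof
    assume "y = 0"
    then have "(- (w1 \<bullet> w2)) *\<^sub>R bv 1 + (w1 \<bullet> w1) *\<^sub>R bv 2 = 0"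
      by (simp add: y_def w1_def w2_def algebra_simps)
    then have "w1 \<bullet> w1 = 0" using Ib by blast
    then show False using w1nz by simp
  qed
  define R :: "real^4^4" where "R = (\<chi> r. if r = 1 then u 0 else if r = 2 then u 1 else if r = 3 then u 2 else w1)"
  have uw: "u k \<bullet> w1 = 0" "u k \<bullet> w2 = 0" if "k < 3" for k
    using bu0[of 1 k] bu0[of 2 k] that by (simp_all add: w1_def w2_def inner_commute)
  have "R *v y = 0"
  proof -
    have "(R *v y) $ r = 0" for r
    proof -
      have "(R *v y) $ r = R $ r \<bullet> y" by (simp add: matrix_vector_mult_def inner_sum4)
      moreover have "R $ r \<bullet> y = 0"
        using exhaust_4[of r] uw[of 0] uw[of 1] uw[of 2]
        by (auto simp: R_def y_def inner_diff_right inner_commute)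
      ultimately show ?thesis by simp
    qed
    then show ?thesis by (simp add: vec_eq_iff)
  qed
  then have "rank R \<noteq> CARD(4)"
    using ynz matrix_nonfull_linear_equations_eq by blast
  then have "rank (transpose R) \<noteq> CARD(4)" by (simp add: rank_transpose)
  then obtain z :: "real^4" where z: "z \<noteq> 0" "transpose R *v z = 0"
    using matrix_nonfull_linear_equations_eq by blast
  have zsum: "z$1 *\<^sub>R u 0 + z$2 *\<^sub>R u 1 + z$3 *\<^sub>R u 2 + z$4 *\<^sub>R w1 = 0"
  proof -
    have "(transpose R *v z) $ c = (z$1 *\<^sub>R u 0 + z$2 *\<^sub>R u 1 + z$3 *\<^sub>R u 2 + z$4 *\<^sub>R w1) $ c" for c
      by (simp add: matrix_vector_mult_def transpose_def sum_4 R_def mult.commute)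
    then show ?thesis using z(2) by (simp add: vec_eq_iff)
  qed
  have "z$4 = 0"
  proof -
    have "(z$1 *\<^sub>R u 0 + z$2 *\<^sub>R u 1 + z$3 *\<^sub>R u 2 + z$4 *\<^sub>R w1) \<bullet> w1 = z$4 * (w1 \<bullet> w1)"
      using uw[of 0] uw[of 1] uw[of 2] by (simp add: inner_add_left)
    then show ?thesis using zsum w1nz by simp
  qed
  define w where "w = z$1 *\<^sub>R cv 0 + z$2 *\<^sub>R cv 1 + z$3 *\<^sub>R cv 2"
  have "M *v w = 0"
  proof -
    have "M *v w = z$1 *\<^sub>R u 0 + z$2 *\<^sub>R u 1 + z$3 *\<^sub>R u 2"
      by (simp add: w_def u_def matrix_vector_right_distrib matrix_vector_mult_scaleR)
    then show ?thesis using zsum \<open>z$4 = 0\<close> by simp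
  qed
  moreover have "w \<noteq> 0"
  proof
    assume "w = 0"
    then have "z$1 = 0 \<and> z$2 = 0 \<and> z$3 = 0" using Ic unfolding w_def by blast
    then have "z = 0" unfolding vec_eq_iff using \<open>z$4 = 0\<close> by (metis exhaust_4 zero_index)
    then show False using z by simp
  qed
  moreover have "x \<noteq> 0"
  proof
    assume "x = 0"
    then have "ent 0 0 0 = 0" by (simp add: ent_def x_def vec_eq_iff)
    then show False using ent[of 0 0 0] by simp
  qed
  ultimately show ?thesis unfolding M_def by blast
qed

definition tq :: "3 \<Rightarrow> 4 \<Rightarrow> 4 \<Rightarrow> real" where
  "tq a b c = (if a = 1 then (if b = c then 1 else 0)
     else if a = 2 then (if b = 1 \<and> c = 2 then -1 else if b = 2 \<and> c = 1 then 1
        else if b = 3 \<and> c = 4 then -1 else if b = 4 \<and> c = 3 then 1 else 0)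
     else (if b = 1 \<and> c = 3 then -1 else if b = 2 \<and> c = 4 then 1
        else if b = 3 \<and> c = 1 then 1 else if b = 4 \<and> c = 2 then -1 else 0))"

definition TQ :: "real^4^4^3" where "TQ = (\<chi> a b c. tq a b c)"

definition MM :: "real^4^4^3 \<Rightarrow> real^3 \<Rightarrow> real^4 \<Rightarrow> real^4" where
  "MM T x w = (\<chi> b. \<Sum>c\<in>UNIV. (\<Sum>a\<in>UNIV. x$a * T$a$b$c) * w$c)"

lemma MM_eq: "(\<chi> b c. \<Sum>a\<in>UNIV. x$a * T$a$b$c) *v w = MM T x w"
  by (simp add: MM_def matrix_vector_mult_def)

lemma quat_norm: "(\<Sum>b\<in>UNIV. (MM TQ x w $ b)^2) = (\<Sum>a\<in>UNIV. (x$a)^2) * (\<Sum>c\<in>UNIV. (w$c)^2)"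
  by (simp add: MM_def TQ_def tq_def sum_3 sum_4 power2_eq_square algebra_simps)

lemma norm_sq_tens: "(norm (D::real^4^4^3))^2 = (\<Sum>a\<in>UNIV. \<Sum>b\<in>UNIV. \<Sum>c\<in>UNIV. (D$a$b$c)^2)"
  unfolding power2_norm_eq_inner by (simp add: inner_vec_def power2_eq_square)

lemma MM_bound: "(\<Sum>b\<in>UNIV. (MM D x w $ b)^2) \<le> (norm D)^2 * ((\<Sum>a\<in>UNIV. (x$a)^2) * (\<Sum>c\<in>UNIV. (w$c)^2))"
proof -
  have "(MM D x w $ b)^2 \<le> (\<Sum>a\<in>UNIV. \<Sum>c\<in>UNIV. (D$a$b$c)^2) * ((\<Sum>a\<in>UNIV. (x$a)^2) * (\<Sum>c\<in>UNIV. (w$c)^2))" for b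
  proof -
    have "MM D x w $ b = (\<Sum>p\<in>UNIV. D$(fst p)$b$(snd p) * (x$(fst p) * w$(snd p)))"
    proof -
      have "MM D x w $ b = (\<Sum>c\<in>UNIV. \<Sum>a\<in>UNIV. D$a$b$c * (x$a * w$c))"
        by (simp add: MM_def sum_distrib_left sum_distrib_right mult_ac)
      also have "\<dots> = (\<Sum>a\<in>UNIV. \<Sum>c\<in>UNIV. D$a$b$c * (x$a * w$c))" by (rule sum.swap)
      also have "\<dots> = (\<Sum>p\<in>UNIV \<times> UNIV. D$(fst p)$b$(snd p) * (x$(fst p) * w$(snd p)))"
        by (simp add: sum.cartesian_product split_def)
      finally show ?thesis by (simp add: UNIV_Times_UNIV case_prod_beta')
    qed
    then have "(MM D x w $ b)^2 \<le> (\<Sum>p\<in>UNIV. (D$(fst p)$b$(snd p))^2) * (\<Sum>p\<in>UNIV. (x$(fst p) * w$(snd p))^2)"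
      by (simp only: Cauchy_Schwarz_ineq_sum)
    also have "(\<Sum>p\<in>UNIV. (D$(fst p)$b$(snd p))^2) = (\<Sum>a\<in>UNIV. \<Sum>c\<in>UNIV. (D$a$b$c)^2)"
      by (simp add: sum.cartesian_product UNIV_Times_UNIV split_def)
    also have "(\<Sum>p\<in>UNIV. (x$(fst p) * w$(snd p))^2) = (\<Sum>a\<in>UNIV. (x$a)^2) * (\<Sum>c\<in>UNIV. (w$c)^2)"
      by (simp add: sum.cartesian_product sum_product power_mult_distrib UNIV_Times_UNIV split_def)
    finally show ?thesis .
  qed
  then have "(\<Sum>b\<in>UNIV. (MM D x w $ b)^2) \<le> (\<Sum>b\<in>UNIV. (\<Sum>a\<in>UNIV. \<Sum>c\<in>UNIV. (D$a$b$c)^2) * ((\<Sum>a\<in>UNIV. (x$a)^2) * (\<Sum>c\<in>UNIV. (w$c)^2)))"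
    by (rule sum_mono)
  also have "\<dots> = (\<Sum>b\<in>UNIV. \<Sum>a\<in>UNIV. \<Sum>c\<in>UNIV. (D$a$b$c)^2) * ((\<Sum>a\<in>UNIV. (x$a)^2) * (\<Sum>c\<in>UNIV. (w$c)^2))"
    by (simp add: sum_distrib_right)
  also have "(\<Sum>b\<in>UNIV. \<Sum>a\<in>UNIV. \<Sum>c\<in>UNIV. (D$a$b$c)^2) = (norm D)^2"
    unfolding norm_sq_tens by (rule sum.swap)
  finally show ?thesis .
qed

lemma MM_add: "MM (T1 + T2) x w = MM T1 x w + MM T2 x w"
  by (simp add: MM_def vec_eq_iff algebra_simps sum.distrib)

lemma near_TQ_nonsing:
  assumes "norm (T - TQ) < 1" "MM T x w = 0"
  shows "x = 0 \<or> w = 0"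
proof (rule ccontr)
  assume nz: "\<not> (x = 0 \<or> w = 0)"
  define X where "X = (\<Sum>a\<in>UNIV. (x$a)^2)"
  define W where "W = (\<Sum>c\<in>UNIV. (w$c)^2)"
  have "X > 0"
  proof -
    obtain a where "x$a \<noteq> 0" using nz by (auto simp: vec_eq_iff)
    then have "(x$a)^2 > 0" by simp
    moreover have "(x$a)^2 \<le> X" unfolding X_def by (rule member_le_sum) auto
    ultimately show ?thesis by linarith
  qed
  have "W > 0"
  proof -
    obtain c where "w$c \<noteq> 0" using nz by (auto simp: vec_eq_iff)
    then have "(w$c)^2 > 0" by simp
    moreover have "(w$c)^2 \<le> W" unfolding W_def by (rule member_le_sum) auto
    ultimately show ?thesis by linarith
  qed
  have "MM TQ x w = - MM (T - TQ) x w"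
    using assms(2) MM_add[of TQ "T - TQ" x w] by (simp add: eq_neg_iff_add_eq_0 add.commute)
  then have "(\<Sum>b\<in>UNIV. (MM TQ x w $ b)^2) = (\<Sum>b\<in>UNIV. (MM (T - TQ) x w $ b)^2)" by simp
  then have "X * W \<le> (norm (T - TQ))^2 * (X * W)"
    using MM_bound[of "T - TQ" x w] quat_norm[of x w] by (simp add: X_def W_def)
  moreover have "(norm (T - TQ))^2 < 1"
    using assms(1) by (simp add: power_less_one_iff abs_less_iff) 
  moreover have "X * W > 0" using \<open>X > 0\<close> \<open>W > 0\<close> by simp
  ultimately show False
    using mult_strict_right_mono[of "(norm (T - TQ))^2" 1 "X * W"] by linarith
qed

definition T1 :: "real^4^4^3" where
  "T1 = (\<chi> a b c. tq a b c + (if a = 2 \<and> b = 4 \<and> c = 4 then 1/10 else 0))"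

lemma DD_T1: "DD T1 = 1/10"
  by (simp add: DD_def uu_def vv_def bb1_def cc1_def colv_def T1_def tq_def cross4_components det3_def sum_3 sum_4)

lemma T1_near: "norm (T1 - TQ) < 1"
proof -
  have "(norm (T1 - TQ))^2 = 1/100"
    unfolding norm_sq_tens by (simp add: T1_def TQ_def sum_3 sum_4 power2_eq_square)
  then have "(norm (T1 - TQ))^2 < 1^2" by simp
  then show ?thesis by (rule power_less_imp_less_base) simp
qed

definition polyfun :: "(real \<Rightarrow> real) \<Rightarrow> bool" where
  "polyfun f \<longleftrightarrow> (\<exists>p. \<forall>t. f t = poly p t)"

lemma polyfun_const[intro]: "polyfun (\<lambda>t. c)"
  unfolding polyfun_def by (rule exI[of _ "[:c:]"]) simp

lemma polyfun_lin[intro]: "polyfun (\<lambda>t. c + t * d)"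
  unfolding polyfun_def by (rule exI[of _ "[:c, d:]"]) simp

lemma polyfun_add[intro]: "polyfun f \<Longrightarrow> polyfun g \<Longrightarrow> polyfun (\<lambda>t. f t + g t)"
  unfolding polyfun_def by (metis poly_add)

lemma polyfun_diff[intro]: "polyfun f \<Longrightarrow> polyfun g \<Longrightarrow> polyfun (\<lambda>t. f t - g t)"
  unfolding polyfun_def by (metis poly_diff)

lemma polyfun_mult[intro]: "polyfun f \<Longrightarrow> polyfun g \<Longrightarrow> polyfun (\<lambda>t. f t * g t)"
  unfolding polyfun_def by (metis poly_mult)

lemma polyfun_minus: "polyfun f \<Longrightarrow> polyfun (\<lambda>t. - f t)"
  unfolding polyfun_def by (metis poly_minus)

lemma polyfun_sum[intro]:
  assumes "\<And>i. polyfun (\<lambda>t. f t i)"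
  shows "polyfun (\<lambda>t. \<Sum>i\<in>(A::'a set). f t i)"
proof (cases "finite A")
  case True
  then show ?thesis
  proof (induction A rule: finite_induct)
    case empty then show ?case using polyfun_const[of 0] by simp
  next
    case (insert x F)
    then show ?case using assms by (simp add: polyfun_add)
  qed
qed (use polyfun_const[of 0] in simp)

lemma polyfun_det3:
  "polyfun a1 \<Longrightarrow> polyfun a2 \<Longrightarrow> polyfun a3 \<Longrightarrow> polyfun b1 \<Longrightarrow> polyfun b2 \<Longrightarrow> polyfun b3 \<Longrightarrow>
   polyfun c1 \<Longrightarrow> polyfun c2 \<Longrightarrow> polyfun c3 \<Longrightarrow>
   polyfun (\<lambda>t. det3 (a1 t) (a2 t) (a3 t) (b1 t) (b2 t) (b3 t) (c1 t) (c2 t) (c3 t))"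
  unfolding det3_def by (intro polyfun_add polyfun_diff polyfun_mult)

lemma polyfun_cross4:
  assumes "\<And>i. polyfun (\<lambda>t. x t $ i)" "\<And>i. polyfun (\<lambda>t. y t $ i)" "\<And>i. polyfun (\<lambda>t. z t $ i)"
  shows "polyfun (\<lambda>t. cross4 (x t) (y t) (z t) $ i)"
  using exhaust_4[of i]
  by (auto simp: cross4_components intro!: polyfun_det3 polyfun_minus assms)

lemma polyfun_DD:
  fixes T E :: "real^4^4^3"
  shows "polyfun (\<lambda>t. DD (T + t *\<^sub>R E))"
proof -
  have comp: "polyfun (\<lambda>t. (T + t *\<^sub>R E) $ a $ b $ c)" for a b c
    using polyfun_lin[of "T$a$b$c" "E$a$b$c"] by simp
  have colv: "polyfun (\<lambda>t. colv (T + t *\<^sub>R E) a $ b)" for a b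
    unfolding colv_def using comp by simp
  have bb1: "polyfun (\<lambda>t. bb1 (T + t *\<^sub>R E) $ b)" for b
    unfolding bb1_def by (intro polyfun_cross4 colv)
  have cc1: "polyfun (\<lambda>t. cc1 (T + t *\<^sub>R E) $ b)" for b
    unfolding cc1_def by (intro polyfun_cross4 comp)
  have uu: "polyfun (\<lambda>t. uu (T + t *\<^sub>R E) a)" for a
    unfolding uu_def by (intro polyfun_sum polyfun_mult bb1 cc1 comp)
  have vv: "polyfun (\<lambda>t. vv (T + t *\<^sub>R E) a)" for a
    unfolding vv_def by (rule comp)
  show ?thesis unfolding DD_def by (intro polyfun_diff polyfun_mult uu vv)
qed

lemma DD_dense:
  fixes T :: "real^4^4^3"
  assumes "e > 0"
  shows "\<exists>T'. dist T' T < e \<and> DD T' \<noteq> 0"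
proof -
  define E where "E = T1 - T"
  obtain p where p: "\<And>t. DD (T + t *\<^sub>R E) = poly p t"
    using polyfun_DD[of T E] unfolding polyfun_def by blast
  have "poly p 1 \<noteq> 0" using p[of 1] DD_T1 by (simp add: E_def)
  then have "p \<noteq> 0" by auto
  then have fin: "finite {t. poly p t = 0}" by (rule poly_roots_finite)
  define d where "d = e / (norm E + 1)"
  have "d > 0" using assms by (simp add: d_def add_nonneg_pos)
  then have "infinite {0<..<d}" by simp
  then obtain t where t: "t \<in> {0<..<d}" "t \<notin> {t. poly p t = 0}"
    using fin by (metis (no_types, lifting) finite_subset subsetI)
  have "dist (T + t *\<^sub>R E) T = t * norm E" using t by (simp add: dist_norm)
  also have "\<dots> \<le> d * norm E" using t by (simp add: mult_right_mono)
  also have "\<dots> < e"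
  proof -
    have "d * norm E < d * (norm E + 1)" using \<open>d > 0\<close> by simp
    also have "\<dots> = e"
    proof -
      have "norm E + 1 \<noteq> 0" using norm_ge_zero[of E] by linarith
      then show ?thesis by (simp add: d_def)
    qed
    finally show ?thesis .
  qed
  finally show ?thesis using t p[of t] by (intro exI[of _ "T + t *\<^sub>R E"]) simp
qed

definition c1 :: "real^'a^'a \<Rightarrow> real^'c^'b^'a \<Rightarrow> real^'c^'b^'a" where
  "c1 P X = (\<chi> a b c. \<Sum>a'\<in>UNIV. P$a$a' * X$a'$b$c)"
definition c2 :: "real^'b^'b \<Rightarrow> real^'c^'b^'a \<Rightarrow> real^'c^'b^'a" where
  "c2 Q X = (\<chi> a b c. \<Sum>b'\<in>UNIV. Q$b$b' * X$a$b'$c)"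
definition c3 :: "real^'c^'c \<Rightarrow> real^'c^'b^'a \<Rightarrow> real^'c^'b^'a" where
  "c3 R X = (\<chi> a b c. \<Sum>c'\<in>UNIV. R$c$c' * X$a$b$c')"

definition contract :: "real^'a^'a \<Rightarrow> real^'b^'b \<Rightarrow> real^'c^'c \<Rightarrow> real^'c^'b^'a \<Rightarrow> real^'c^'b^'a" where
  "contract P Q R X = (\<chi> a b c. \<Sum>a'\<in>UNIV. \<Sum>b'\<in>UNIV. \<Sum>c'\<in>UNIV. P$a$a' * Q$b$b' * R$c$c' * X$a'$b'$c')"

lemma contract_c: "contract P Q R X = c1 P (c2 Q (c3 R X))"
  by (simp add: contract_def c1_def c2_def c3_def vec_eq_iff sum_distrib_left mult_ac)

lemma c1_c1: "c1 P' (c1 P X) = c1 (P' ** P) X"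
proof -
  have "(\<Sum>a''\<in>UNIV. P'$a$a'' * (\<Sum>a'\<in>UNIV. P$a''$a' * X$a'$b$c)) = (\<Sum>a'\<in>UNIV. (\<Sum>a''\<in>UNIV. P'$a$a'' * P$a''$a') * X$a'$b$c)" for a b c
  proof -
    have "(\<Sum>a''\<in>UNIV. P'$a$a'' * (\<Sum>a'\<in>UNIV. P$a''$a' * X$a'$b$c)) = (\<Sum>a''\<in>UNIV. \<Sum>a'\<in>UNIV. P'$a$a'' * P$a''$a' * X$a'$b$c)"
      by (simp add: sum_distrib_left mult_ac)
    also have "\<dots> = (\<Sum>a'\<in>UNIV. \<Sum>a''\<in>UNIV. P'$a$a'' * P$a''$a' * X$a'$b$c)" by (rule sum.swap)
    also have "\<dots> = (\<Sum>a'\<in>UNIV. (\<Sum>a''\<in>UNIV. P'$a$a'' * P$a''$a') * X$a'$b$c)" by (simp add: sum_distrib_right)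
    finally show ?thesis .
  qed
  then show ?thesis by (simp add: c1_def matrix_matrix_mult_def vec_eq_iff)
qed

lemma c2_c2: "c2 Q' (c2 Q X) = c2 (Q' ** Q) X"
proof -
  have "(\<Sum>a''\<in>UNIV. Q'$b$a'' * (\<Sum>a'\<in>UNIV. Q$a''$a' * X$a$a'$c)) = (\<Sum>a'\<in>UNIV. (\<Sum>a''\<in>UNIV. Q'$b$a'' * Q$a''$a') * X$a$a'$c)" for a b c
  proof -
    have "(\<Sum>a''\<in>UNIV. Q'$b$a'' * (\<Sum>a'\<in>UNIV. Q$a''$a' * X$a$a'$c)) = (\<Sum>a''\<in>UNIV. \<Sum>a'\<in>UNIV. Q'$b$a'' * Q$a''$a' * X$a$a'$c)"
      by (simp add: sum_distrib_left mult_ac)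
    also have "\<dots> = (\<Sum>a'\<in>UNIV. \<Sum>a''\<in>UNIV. Q'$b$a'' * Q$a''$a' * X$a$a'$c)" by (rule sum.swap)
    also have "\<dots> = (\<Sum>a'\<in>UNIV. (\<Sum>a''\<in>UNIV. Q'$b$a'' * Q$a''$a') * X$a$a'$c)" by (simp add: sum_distrib_right)
    finally show ?thesis .
  qed
  then show ?thesis by (simp add: c2_def matrix_matrix_mult_def vec_eq_iff)
qed

lemma c3_c3: "c3 R' (c3 R X) = c3 (R' ** R) X"
proof -
  have "(\<Sum>a''\<in>UNIV. R'$c$a'' * (\<Sum>a'\<in>UNIV. R$a''$a' * X$a$b$a')) = (\<Sum>a'\<in>UNIV. (\<Sum>a''\<in>UNIV. R'$c$a'' * R$a''$a') * X$a$b$a')" for a b c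
  proof -
    have "(\<Sum>a''\<in>UNIV. R'$c$a'' * (\<Sum>a'\<in>UNIV. R$a''$a' * X$a$b$a')) = (\<Sum>a''\<in>UNIV. \<Sum>a'\<in>UNIV. R'$c$a'' * R$a''$a' * X$a$b$a')"
      by (simp add: sum_distrib_left mult_ac)
    also have "\<dots> = (\<Sum>a'\<in>UNIV. \<Sum>a''\<in>UNIV. R'$c$a'' * R$a''$a' * X$a$b$a')" by (rule sum.swap)
    also have "\<dots> = (\<Sum>a'\<in>UNIV. (\<Sum>a''\<in>UNIV. R'$c$a'' * R$a''$a') * X$a$b$a')" by (simp add: sum_distrib_right)
    finally show ?thesis .
  qed
  then show ?thesis by (simp add: c3_def matrix_matrix_mult_def vec_eq_iff)
qed

lemma c1_c2: "c1 P (c2 Q X) = c2 Q (c1 P X)"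
proof -
  have "(\<Sum>a'\<in>UNIV. P$a$a' * (\<Sum>b'\<in>UNIV. Q$b$b' * X$a'$b'$c)) = (\<Sum>b'\<in>UNIV. Q$b$b' * (\<Sum>a'\<in>UNIV. P$a$a' * X$a'$b'$c))" for a b c
  proof -
    have "(\<Sum>a'\<in>UNIV. P$a$a' * (\<Sum>b'\<in>UNIV. Q$b$b' * X$a'$b'$c)) = (\<Sum>a'\<in>UNIV. \<Sum>b'\<in>UNIV. Q$b$b' * (P$a$a' * X$a'$b'$c))"
      by (simp add: sum_distrib_left mult_ac)
    also have "\<dots> = (\<Sum>b'\<in>UNIV. \<Sum>a'\<in>UNIV. Q$b$b' * (P$a$a' * X$a'$b'$c))" by (rule sum.swap)
    also have "\<dots> = (\<Sum>b'\<in>UNIV. Q$b$b' * (\<Sum>a'\<in>UNIV. P$a$a' * X$a'$b'$c))" by (simp add: sum_distrib_left)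
    finally show ?thesis .
  qed
  then show ?thesis by (simp add: c1_def c2_def vec_eq_iff)
qed

lemma c1_c3: "c1 P (c3 R X) = c3 R (c1 P X)"
proof -
  have "(\<Sum>a'\<in>UNIV. P$a$a' * (\<Sum>b'\<in>UNIV. R$c$b' * X$a'$b$b')) = (\<Sum>b'\<in>UNIV. R$c$b' * (\<Sum>a'\<in>UNIV. P$a$a' * X$a'$b$b'))" for a b c
  proof -
    have "(\<Sum>a'\<in>UNIV. P$a$a' * (\<Sum>b'\<in>UNIV. R$c$b' * X$a'$b$b')) = (\<Sum>a'\<in>UNIV. \<Sum>b'\<in>UNIV. R$c$b' * (P$a$a' * X$a'$b$b'))"
      by (simp add: sum_distrib_left mult_ac)
    also have "\<dots> = (\<Sum>b'\<in>UNIV. \<Sum>a'\<in>UNIV. R$c$b' * (P$a$a' * X$a'$b$b'))" by (rule sum.swap)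
    also have "\<dots> = (\<Sum>b'\<in>UNIV. R$c$b' * (\<Sum>a'\<in>UNIV. P$a$a' * X$a'$b$b'))" by (simp add: sum_distrib_left)
    finally show ?thesis .
  qed
  then show ?thesis by (simp add: c1_def c3_def vec_eq_iff)
qed

lemma c2_c3: "c2 Q (c3 R X) = c3 R (c2 Q X)"
proof -
  have "(\<Sum>a'\<in>UNIV. Q$b$a' * (\<Sum>b'\<in>UNIV. R$c$b' * X$a$a'$b')) = (\<Sum>b'\<in>UNIV. R$c$b' * (\<Sum>a'\<in>UNIV. Q$b$a' * X$a$a'$b'))" for a b c
  proof -
    have "(\<Sum>a'\<in>UNIV. Q$b$a' * (\<Sum>b'\<in>UNIV. R$c$b' * X$a$a'$b')) = (\<Sum>a'\<in>UNIV. \<Sum>b'\<in>UNIV. R$c$b' * (Q$b$a' * X$a$a'$b'))"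
      by (simp add: sum_distrib_left mult_ac)
    also have "\<dots> = (\<Sum>b'\<in>UNIV. \<Sum>a'\<in>UNIV. R$c$b' * (Q$b$a' * X$a$a'$b'))" by (rule sum.swap)
    also have "\<dots> = (\<Sum>b'\<in>UNIV. R$c$b' * (\<Sum>a'\<in>UNIV. Q$b$a' * X$a$a'$b'))" by (simp add: sum_distrib_left)
    finally show ?thesis .
  qed
  then show ?thesis by (simp add: c2_def c3_def vec_eq_iff)
qed

lemma contract_contract:
  "contract P' Q' R' (contract P Q R X) = contract (P' ** P) (Q' ** Q) (R' ** R) X"
  unfolding contract_c
  by (simp add: c1_c1 c2_c2 c3_c3 c1_c2 c1_c3 c2_c3 flip: c1_c1 c2_c2 c3_c3)

lemma delta_mult: "(if P then 1 else 0) * y = (if P then y else (0::real))"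
  by simp

lemma c_id: "c1 (mat 1) X = X" "c2 (mat 1) X = X" "c3 (mat 1) X = X"
  by (simp_all add: c1_def c2_def c3_def mat_def vec_eq_iff delta_mult sum.delta')

lemma contract_id: "contract (mat 1) (mat 1) (mat 1) X = X"
  unfolding contract_c by (simp add: c_id)

definition e3 :: "nat \<Rightarrow> 3" where "e3 i = (if i = 0 then 1 else if i = 1 then 2 else 3)"
definition e4 :: "nat \<Rightarrow> 4" where "e4 i = (if i = 0 then 1 else if i = 1 then 2 else 3)"
definition emb :: "3 \<Rightarrow> 4" where "emb a = (if a = 1 then 1 else if a = 2 then 2 else 3)"
definition nx :: "3 \<Rightarrow> 3" where "nx a = (if a = 1 then 2 else if a = 2 then 3 else 1)"

definition s0 :: "3 \<Rightarrow> 4 \<Rightarrow> 4 \<Rightarrow> real" where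
  "s0 a b c = (if b \<noteq> 4 \<and> c \<noteq> 4 then (if b = c \<and> b = emb a then 1 else 0)
     else if b = 4 \<and> c \<noteq> 4 then 1
     else if c = 4 \<and> b \<noteq> 4 then (if b = emb (nx a) then 1 else 0) else 0)"

definition nbm :: "4 \<Rightarrow> 4 \<Rightarrow> real" where "nbm b c = (if b = 4 \<or> c = 4 then 1 else 0)"

definition Sv :: "real^4^4^3 \<Rightarrow> real^4^4^3" where
  "Sv \<sigma> = (\<chi> a b c. s0 a b c + nbm b c * \<sigma>$a$b$c)"

type_synonym X = "(real^4^4^3) \<times> ((real^3^3) \<times> ((real^4^4) \<times> (real^4^4)))"

definition Fm :: "X \<Rightarrow> real^4^4^3" where
  "Fm x = (\<chi> a b c. \<Sum>a'\<in>UNIV. \<Sum>b'\<in>UNIV. \<Sum>c'\<in>UNIV.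
      ((if a = a' then 1 else 0) + fst (snd x) $a$a') * ((if b = b' then 1 else 0) + fst (snd (snd x)) $b$b')
      * ((if c = c' then 1 else 0) + snd (snd (snd x)) $c$c') * (s0 a' b' c' + nbm b' c' * fst x $a'$b'$c'))"

lemma Fm_contract:
  "Fm x = contract (mat 1 + fst (snd x)) (mat 1 + fst (snd (snd x))) (mat 1 + snd (snd (snd x))) (Sv (fst x))"
  by (simp add: Fm_def contract_def Sv_def mat_def)

lemma restricts_from_contract:
  fixes X :: "real^'c^'b^'a"
  assumes "\<forall>i<r. \<forall>j<r. \<forall>k<r. contract P Q R X $ ea i $ eb j $ ec k = (if i = j \<and> j = k then 1 else 0)"
  shows "restricts_to_unit r X"
  unfolding restricts_to_unit_def
  apply (rule exI[of _ "\<lambda>i a. P $ ea i $ a"], rule exI[of _ "\<lambda>j b. Q $ eb j $ b"], rule exI[of _ "\<lambda>k c. R $ ec k $ c"])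
  using assms by (simp add: contract_def)

lemma Sv_block:
  assumes "i < 3" "j < 3" "k < 3"
  shows "Sv \<sigma> $ e3 i $ e4 j $ e4 k = (if i = j \<and> j = k then 1 else 0)"
proof -
  have "i = 0 \<or> i = 1 \<or> i = 2" "j = 0 \<or> j = 1 \<or> j = 2" "k = 0 \<or> k = 1 \<or> k = 2" using assms by auto
  then show ?thesis by (auto simp: Sv_def s0_def nbm_def e3_def e4_def emb_def)
qed

lemma restricts3_Fm:
  assumes "invertible (mat 1 + fst (snd x))" "invertible (mat 1 + fst (snd (snd x)))" "invertible (mat 1 + snd (snd (snd x)))"
  shows "restricts_to_unit 3 (Fm x)"
proof -
  obtain P where P: "P ** (mat 1 + fst (snd x)) = mat 1" using assms(1) invertible_def by blast
  obtain Q where Q: "Q ** (mat 1 + fst (snd (snd x))) = mat 1" using assms(2) invertible_def by blast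
  obtain R where R: "R ** (mat 1 + snd (snd (snd x))) = mat 1" using assms(3) invertible_def by blast
  have "contract P Q R (Fm x) = Sv (fst x)"
    unfolding Fm_contract contract_contract P Q R contract_id ..
  then show ?thesis
    by (intro restricts_from_contract[where P=P and Q=Q and R=R and ea=e3 and eb=e4 and ec=e4]) (simp add: Sv_block)
qed

lemma invertible_near_id:
  fixes M :: "real^'n^'n"
  assumes "\<And>i j. \<bar>M$i$j\<bar> \<le> B" "real CARD('n) * real CARD('n) * B < 1"
  shows "invertible (mat 1 + M)"
proof -
  have "v = 0" if v: "(mat 1 + M) *v v = 0" for v
  proof (rule ccontr)
    assume "v \<noteq> 0"
    have "v = - (M *v v)" using v by (simp add: matrix_vector_mult_add_rdistrib eq_neg_iff_add_eq_0)
    then have "norm v = norm (M *v v)" by (metis norm_minus_cancel)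
    also have "\<dots> \<le> onorm ((*v) M) * norm v" by (rule onorm) simp
    also have "\<dots> \<le> (real CARD('n) * real CARD('n) * B) * norm v"
      by (rule mult_right_mono[OF onorm_le_matrix_component[OF assms(1)]]) simp
    finally have "norm v \<le> (real CARD('n) * real CARD('n) * B) * norm v" .
    moreover have "norm v > 0" using \<open>v \<noteq> 0\<close> by simp
    ultimately show False using assms(2)
      by (metis mult_less_cancel_right2 not_le)
  qed
  then show ?thesis
    unfolding invertible_left_inverse matrix_left_invertible_ker by blast
qed

lemma basis_vecE:
  fixes u :: "'a::euclidean_space^'n"
  assumes "u \<in> Basis"
  obtains i v where "u = axis i v" "v \<in> Basis"
  using assms unfolding Basis_vec_def by blast

lemma has_derivative_tens:
  fixes f :: "'x::real_normed_vector \<Rightarrow> real^'c^'b^'a"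
  assumes "\<And>a b c. ((\<lambda>x. f x $a$b$c) has_derivative (\<lambda>h. f' h $a$b$c)) (at x0)"
  shows "(f has_derivative f') (at x0)"
proof -
  have "((\<lambda>x. f x \<bullet> i) has_derivative (\<lambda>h. f' h \<bullet> i)) (at x0)" if iB: "i \<in> Basis" for i
  proof -
    obtain a u where u: "i = axis a u" "u \<in> Basis" by (rule basis_vecE[OF iB])
    obtain b v where v: "u = axis b v" "v \<in> Basis" by (rule basis_vecE[OF u(2)])
    obtain c w where w: "v = axis c w" "w \<in> Basis" by (rule basis_vecE[OF v(2)])
    have "w = 1" using w(2) by simp
    then have "\<And>y::real^'c^'b^'a. y \<bullet> i = y$a$b$c" using u v w by (simp add: inner_axis)
    then show ?thesis using assms[of a b c] by simp
  qed
  then show ?thesis using has_derivative_componentwise_within[of f f' x0 UNIV] by simp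
qed

lemma has_derivative_vec_nth:
  "(f has_derivative f') F \<Longrightarrow> ((\<lambda>x. f x $ i) has_derivative (\<lambda>h. f' h $ i)) F"
  by (rule bounded_linear.has_derivative[OF bounded_linear_vec_nth])

definition Fd :: "X \<Rightarrow> real^4^4^3" where
  "Fd h = (\<chi> a b c. (\<Sum>a'\<in>UNIV. fst (snd h) $a$a' * s0 a' b c) + (\<Sum>b'\<in>UNIV. fst (snd (snd h)) $b$b' * s0 a b' c)
     + (\<Sum>c'\<in>UNIV. snd (snd (snd h)) $c$c' * s0 a b c') + nbm b c * fst h $a$b$c)"

lemma sum_delta_first:
  fixes f :: "'a::finite \<Rightarrow> real"
  shows "(\<Sum>i\<in>UNIV. (if a = i then 1 else 0) * f i) = f a"
  by (simp add: delta_mult sum.delta sum.delta')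

lemma collapse3:
  fixes Y s :: "'a::finite \<Rightarrow> 'b::finite \<Rightarrow> 'c::finite \<Rightarrow> real" and K :: "'c \<Rightarrow> real"
    and P :: "'b \<Rightarrow> real" and Al :: "'a \<Rightarrow> real"
  shows "(\<Sum>i\<in>UNIV. \<Sum>ia\<in>UNIV. \<Sum>ib\<in>UNIV.
      (if a = i then 1 else 0) * (if b = ia then 1 else 0) * (if c = ib then 1 else 0) * Y i ia ib +
      ((if a = i then 1 else 0) * (if b = ia then 1 else 0) * K ib +
       ((if a = i then 1 else 0) * P ia + Al i * (if b = ia then 1 else 0)) * (if c = ib then 1 else 0)) * s i ia ib)
    = (\<Sum>i\<in>UNIV. Al i * s i b c) + (\<Sum>ia\<in>UNIV. P ia * s a ia c) + (\<Sum>ib\<in>UNIV. K ib * s a b ib) + Y a b c"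
proof -
  let ?da = "\<lambda>i. (if a = i then 1 else 0) :: real"
  let ?db = "\<lambda>i. (if b = i then 1 else 0) :: real"
  let ?dc = "\<lambda>i. (if c = i then 1 else 0) :: real"
  have e: "?da i * ?db ia * ?dc ib * Y i ia ib + (?da i * ?db ia * K ib + (?da i * P ia + Al i * ?db ia) * ?dc ib) * s i ia ib
    = ?da i * (?db ia * (?dc ib * Y i ia ib)) + ?da i * (?db ia * (K ib * s i ia ib))
      + ?da i * (P ia * (?dc ib * s i ia ib)) + Al i * (?db ia * (?dc ib * s i ia ib))" for i ia ib
    by (simp add: algebra_simps)
  have t1: "(\<Sum>i\<in>UNIV. \<Sum>ia\<in>UNIV. \<Sum>ib\<in>UNIV. ?da i * (?db ia * (?dc ib * Y i ia ib))) = Y a b c"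
  proof -
    have "(\<Sum>i\<in>UNIV. \<Sum>ia\<in>UNIV. \<Sum>ib\<in>UNIV. ?da i * (?db ia * (?dc ib * Y i ia ib)))
      = (\<Sum>i\<in>UNIV. ?da i * (\<Sum>ia\<in>UNIV. ?db ia * (\<Sum>ib\<in>UNIV. ?dc ib * Y i ia ib)))"
      by (simp only: sum_distrib_left)
    also have "\<dots> = Y a b c" by (simp only: sum_delta_first)
    finally show ?thesis .
  qed
  have t2: "(\<Sum>i\<in>UNIV. \<Sum>ia\<in>UNIV. \<Sum>ib\<in>UNIV. ?da i * (?db ia * (K ib * s i ia ib))) = (\<Sum>ib\<in>UNIV. K ib * s a b ib)"
  proof -
    have "(\<Sum>i\<in>UNIV. \<Sum>ia\<in>UNIV. \<Sum>ib\<in>UNIV. ?da i * (?db ia * (K ib * s i ia ib)))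
      = (\<Sum>i\<in>UNIV. ?da i * (\<Sum>ia\<in>UNIV. ?db ia * (\<Sum>ib\<in>UNIV. K ib * s i ia ib)))"
      by (simp only: sum_distrib_left)
    also have "\<dots> = (\<Sum>ib\<in>UNIV. K ib * s a b ib)" by (simp only: sum_delta_first)
    finally show ?thesis .
  qed
  have t3: "(\<Sum>i\<in>UNIV. \<Sum>ia\<in>UNIV. \<Sum>ib\<in>UNIV. ?da i * (P ia * (?dc ib * s i ia ib))) = (\<Sum>ia\<in>UNIV. P ia * s a ia c)"
  proof -
    have "(\<Sum>i\<in>UNIV. \<Sum>ia\<in>UNIV. \<Sum>ib\<in>UNIV. ?da i * (P ia * (?dc ib * s i ia ib)))
      = (\<Sum>i\<in>UNIV. ?da i * (\<Sum>ia\<in>UNIV. P ia * (\<Sum>ib\<in>UNIV. ?dc ib * s i ia ib)))"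
      by (simp only: sum_distrib_left)
    also have "\<dots> = (\<Sum>ia\<in>UNIV. P ia * s a ia c)" by (simp only: sum_delta_first)
    finally show ?thesis .
  qed
  have t4: "(\<Sum>i\<in>UNIV. \<Sum>ia\<in>UNIV. \<Sum>ib\<in>UNIV. Al i * (?db ia * (?dc ib * s i ia ib))) = (\<Sum>i\<in>UNIV. Al i * s i b c)"
  proof -
    have "(\<Sum>i\<in>UNIV. \<Sum>ia\<in>UNIV. \<Sum>ib\<in>UNIV. Al i * (?db ia * (?dc ib * s i ia ib)))
      = (\<Sum>i\<in>UNIV. Al i * (\<Sum>ia\<in>UNIV. ?db ia * (\<Sum>ib\<in>UNIV. ?dc ib * s i ia ib)))"
      by (simp only: sum_distrib_left)
    also have "\<dots> = (\<Sum>i\<in>UNIV. Al i * s i b c)" by (simp only: sum_delta_first)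
    finally show ?thesis .
  qed
  show ?thesis
    unfolding e sum.distrib t1 t2 t3 t4 by (simp only: ac_simps)
qed

lemma Fm_deriv_comp: "((\<lambda>x. Fm x $a$b$c) has_derivative (\<lambda>h. Fd h $a$b$c)) (at 0)"
  unfolding Fm_def vec_lambda_beta
  apply (rule has_derivative_eq_rhs)
   apply (rule has_derivative_sum has_derivative_mult has_derivative_add has_derivative_const has_derivative_vec_nth has_derivative_fst has_derivative_snd has_derivative_ident)+
  apply (rule ext)
  apply (simp only: Fd_def vec_lambda_beta fst_zero snd_zero zero_index add_0_right add_0_left mult_zero_left mult_zero_right)
  apply (subst collapse3)
  apply (simp only: ac_simps)
  done

lemma Fm_deriv: "(Fm has_derivative Fd) (at 0)"
  by (rule has_derivative_tens) (rule Fm_deriv_comp)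

lemma Fm_cont: "continuous_on UNIV Fm"
  unfolding Fm_def by (intro continuous_intros)

definition p3 :: "4 \<Rightarrow> 3" where "p3 l = (if l = 1 then 1 else if l = 2 then 2 else 3)"

definition xv :: "real^4^4^3 \<Rightarrow> 4 \<Rightarrow> real" where
  "xv E j = (if j = 1 then E$2$1$3 else if j = 2 then E$3$2$1 else if j = 3 then E$1$3$2 else 0)"
definition yv :: "real^4^4^3 \<Rightarrow> 4 \<Rightarrow> real" where
  "yv E k = (if k = 1 then E$2$3$1 - xv E 3 else if k = 2 then E$3$1$2 - xv E 1 else if k = 3 then E$1$2$3 - xv E 2 else 0)"

definition dpi :: "real^4^4^3 \<Rightarrow> real^4^4" where
  "dpi E = (\<chi> j l. if j \<noteq> 4 \<and> l = 4 then xv E j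
      else if j \<noteq> 4 \<and> l \<noteq> 4 \<and> j \<noteq> l then E$(p3 l)$j$l - xv E j - yv E l * s0 (p3 l) j 4 else 0)"
definition dka :: "real^4^4^3 \<Rightarrow> real^4^4" where
  "dka E = (\<chi> k l. if k \<noteq> 4 \<and> l = 4 then yv E k
      else if k \<noteq> 4 \<and> l \<noteq> 4 \<and> k \<noteq> l then E$(p3 l)$l$k - xv E l else 0)"
definition dal :: "real^4^4^3 \<Rightarrow> real^3^3" where
  "dal E = (\<chi> a a'. E$a$(emb a')$(emb a') - xv E (emb a') - yv E (emb a') * s0 a (emb a') 4)"
definition G0 :: "real^4^4^3 \<Rightarrow> real^4^4^3" where
  "G0 E = Fd (0, (dal E, (dpi E, dka E)))"
definition Gi :: "real^4^4^3 \<Rightarrow> X" where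
  "Gi E = (E - G0 E, (dal E, (dpi E, dka E)))"

lemma Fd_split: "Fd h $a$b$c = Fd (0, snd h) $a$b$c + nbm b c * fst h $a$b$c"
  by (simp add: Fd_def)

lemma G0_block:
  assumes "b \<noteq> 4" "c \<noteq> 4"
  shows "G0 E $a$b$c = E$a$b$c"
proof -
  have "a = 1 \<or> a = 2 \<or> a = 3" using exhaust_3 by blast
  moreover have "b = 1 \<or> b = 2 \<or> b = 3" using exhaust_4[of b] assms by blast
  moreover have "c = 1 \<or> c = 2 \<or> c = 3" using exhaust_4[of c] assms by blast
  ultimately show ?thesis
    by (elim disjE) (simp_all add: G0_def Fd_def sum_3 sum_4 s0_def emb_def nx_def p3_def xv_def yv_def dpi_def dka_def dal_def nbm_def)
qed

lemma Fd_Gi: "Fd (Gi E) = E"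
proof -
  have "Fd (Gi E) $a$b$c = E$a$b$c" for a b c
  proof (cases "b = 4 \<or> c = 4")
    case True
    then show ?thesis by (subst Fd_split) (simp add: Gi_def G0_def nbm_def)
  next
    case False
    then show ?thesis by (subst Fd_split) (simp add: Gi_def nbm_def G0_block flip: G0_def)
  qed
  then show ?thesis by (simp add: vec_eq_iff)
qed

lemma Fd_add: "Fd (h1 + h2) = Fd h1 + Fd h2"
  by (simp add: Fd_def vec_eq_iff sum.distrib algebra_simps)
lemma Fd_scale: "Fd (r *\<^sub>R h) = r *\<^sub>R Fd h"
  by (simp add: Fd_def vec_eq_iff sum_distrib_left algebra_simps)
lemma xv_add: "xv (x + y) j = xv x j + xv y j" by (simp add: xv_def)
lemma yv_add: "yv (x + y) j = yv x j + yv y j" by (simp add: yv_def xv_add)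
lemma xv_scale: "xv (r *\<^sub>R x) j = r * xv x j" by (simp add: xv_def)
lemma yv_scale: "yv (r *\<^sub>R x) j = r * yv x j" by (simp add: yv_def xv_scale algebra_simps)
lemma dal_add: "dal (x + y) = dal x + dal y" by (simp add: dal_def vec_eq_iff xv_add yv_add algebra_simps)
lemma dpi_add: "dpi (x + y) = dpi x + dpi y" by (simp add: dpi_def vec_eq_iff xv_add yv_add algebra_simps)
lemma dka_add: "dka (x + y) = dka x + dka y" by (simp add: dka_def vec_eq_iff xv_add yv_add algebra_simps)
lemma dal_scale: "dal (r *\<^sub>R x) = r *\<^sub>R dal x" by (simp add: dal_def vec_eq_iff xv_scale yv_scale algebra_simps)
lemma dpi_scale: "dpi (r *\<^sub>R x) = r *\<^sub>R dpi x" by (simp add: dpi_def vec_eq_iff xv_scale yv_scale algebra_simps)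
lemma dka_scale: "dka (r *\<^sub>R x) = r *\<^sub>R dka x" by (simp add: dka_def vec_eq_iff xv_scale yv_scale algebra_simps)

lemma G0_add: "G0 (x + y) = G0 x + G0 y"
proof -
  have "(0::real^4^4^3, (dal (x + y), (dpi (x + y), dka (x + y)))) = (0, (dal x, (dpi x, dka x))) + (0, (dal y, (dpi y, dka y)))"
    by (simp add: dal_add dpi_add dka_add)
  then show ?thesis unfolding G0_def by (simp only: Fd_add)
qed

lemma G0_scale: "G0 (r *\<^sub>R x) = r *\<^sub>R G0 x"
proof -
  have "(0::real^4^4^3, (dal (r *\<^sub>R x), (dpi (r *\<^sub>R x), dka (r *\<^sub>R x)))) = r *\<^sub>R (0, (dal x, (dpi x, dka x)))"
    by (simp add: dal_scale dpi_scale dka_scale)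
  then show ?thesis unfolding G0_def by (simp only: Fd_scale)
qed

lemma Gi_linear: "bounded_linear Gi"
proof -
  have "linear Gi"
    by (rule linearI) (simp_all add: Gi_def G0_add G0_scale dal_add dpi_add dka_add dal_scale dpi_scale dka_scale algebra_simps)
  then show ?thesis by (simp add: linear_conv_bounded_linear)
qed

lemma entry_le_norm: "\<bar>(M::real^'n^'m) $ i $ j\<bar> \<le> norm M"
  using component_le_norm_cart[of "M$i" j] Finite_Cartesian_Product.norm_nth_le[of M i] by linarith

lemma norm_fst_le': "norm (fst p) \<le> norm p"
  using norm_fst_le[where x="fst p" and y="snd p"] by simp
lemma norm_snd_le': "norm (snd p) \<le> norm p"
  using norm_snd_le[where x="fst p" and y="snd p"] by simp

lemma entry_lt: "norm (M::real^'n^'m) < B \<Longrightarrow> \<bar>M $ i $ j\<bar> \<le> B"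
  using entry_le_norm[of M i j] by linarith

lemma Fm_image_restricts:
  assumes "x \<in> ball (0::X) (1/20)"
  shows "restricts_to_unit 3 (Fm x)"
proof -
  have nx: "norm x < 1/20" using assms by simp
  have n1: "norm (fst (snd x)) < 1/20" using nx norm_fst_le'[of "snd x"] norm_snd_le'[of x] by linarith
  have n2: "norm (fst (snd (snd x))) < 1/20" using nx norm_fst_le'[of "snd (snd x)"] norm_snd_le'[of x] norm_snd_le'[of "snd x"] by linarith
  have n3: "norm (snd (snd (snd x))) < 1/20" using nx norm_snd_le'[of "snd (snd x)"] norm_snd_le'[of x] norm_snd_le'[of "snd x"] by linarith
  show ?thesis
  proof (rule restricts3_Fm)
    show "invertible (mat 1 + fst (snd x))"
      by (rule invertible_near_id[where B="1/20", OF entry_lt[OF n1]]) simp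
    show "invertible (mat 1 + fst (snd (snd x)))"
      by (rule invertible_near_id[where B="1/20", OF entry_lt[OF n2]]) simp
    show "invertible (mat 1 + snd (snd (snd x)))"
      by (rule invertible_near_id[where B="1/20", OF entry_lt[OF n3]]) simp
  qed
qed

lemma open_restricts3:
  "\<exists>S::(real^4^4^3) set. open S \<and> S \<noteq> {} \<and> (\<forall>T\<in>S. restricts_to_unit 3 T)"
proof -
  have "Fm 0 \<in> interior (Fm ` ball 0 (1/20))"
  proof (rule sussmann_open_mapping[where S=UNIV and f'=Fd and g'=Gi])
    show "(Fm has_derivative Fd) (at 0)" by (rule Fm_deriv)
    show "Fd \<circ> Gi = id" by (rule ext) (simp add: Fd_Gi)
    show "bounded_linear Gi" by (rule Gi_linear)
    show "continuous_on UNIV Fm" by (rule Fm_cont)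
  qed auto
  then show ?thesis
    by (intro exI[of _ "interior (Fm ` ball 0 (1/20))"])
       (auto dest: interior_subset[THEN subsetD] intro: Fm_image_restricts)
qed

lemma restricts_le3:
  fixes T :: "real^4^4^3"
  assumes "restricts_to_unit r T" shows "r \<le> 3"
proof (rule ccontr)
  assume "\<not> r \<le> 3"
  then have "restricts_to_unit 4 T" using restricts_mono[OF assms] by simp
  then show False using not_restricts_4[of T] by simp
qed

lemma subrank_props:
  fixes T :: "real^4^4^3"
  shows "subrank T \<le> 3" "restricts_to_unit (subrank T) T" "restricts_to_unit k T \<Longrightarrow> k \<le> subrank T"
proof -
  have fin: "finite {r. restricts_to_unit r T}"
    by (rule finite_subset[of _ "{..3}"]) (auto dest: restricts_le3)
  have ne: "{r. restricts_to_unit r T} \<noteq> {}" using restricts_0[of T] by blast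
  show "restricts_to_unit (subrank T) T" unfolding subrank_def using Max_in[OF fin ne] by simp
  then show "subrank T \<le> 3" by (rule restricts_le3)
  show "restricts_to_unit k T \<Longrightarrow> k \<le> subrank T" unfolding subrank_def using fin by (simp add: Max_ge)
qed

lemma subrank_ge2: "DD T \<noteq> 0 \<Longrightarrow> 2 \<le> subrank T"
  using restricts2 subrank_props(3) by blast

lemma subrank_eq3: "restricts_to_unit 3 T \<Longrightarrow> subrank (T::real^4^4^3) = 3"
  using subrank_props(1)[of T] subrank_props(3)[of 3 T] by simp

lemma subrank_le2: "norm (T - TQ) < 1 \<Longrightarrow> subrank T \<le> 2"
proof -
  assume n: "norm (T - TQ) < 1"
  have "\<not> restricts_to_unit 3 T"
  proof
    assume "restricts_to_unit 3 T"
    then obtain x w where "x \<noteq> 0" "w \<noteq> 0" "(\<chi> b c. \<Sum>a\<in>UNIV. x$a * T$a$b$c) *v w = 0"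
      using restricts3_singular by blast
    then have "MM T x w = 0" "x \<noteq> 0" "w \<noteq> 0" by (simp_all add: MM_eq)
    then show False using near_TQ_nonsing[OF n] by blast
  qed
  then have "subrank T \<noteq> 3" using subrank_props(2)[of T] by metis
  then show ?thesis using subrank_props(1)[of T] by simp
qed

lemma continuous_on_cross4:
  assumes "\<And>i. continuous_on S (\<lambda>t. x t $ i)" "\<And>i. continuous_on S (\<lambda>t. y t $ i)" "\<And>i. continuous_on S (\<lambda>t. z t $ i)"
  shows "continuous_on S (\<lambda>t. cross4 (x t) (y t) (z t) $ i)"
  using exhaust_4[of i]
  by (auto simp: cross4_components det3_def intro!: continuous_on_mult continuous_on_diff continuous_on_add continuous_on_minus assms)

lemma DD_cont: "continuous_on UNIV DD"
proof -
  have comp: "continuous_on UNIV (\<lambda>T::real^4^4^3. T$a$b$c)" for a b c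
    by (intro continuous_intros)
  have colv: "continuous_on UNIV (\<lambda>T. colv T a $ b)" for a b
    unfolding colv_def by (simp add: comp)
  have bb1: "continuous_on UNIV (\<lambda>T. bb1 T $ b)" for b
    unfolding bb1_def by (intro continuous_on_cross4 colv)
  have cc1: "continuous_on UNIV (\<lambda>T. cc1 T $ b)" for b
    unfolding cc1_def by (intro continuous_on_cross4 comp)
  have uu: "continuous_on UNIV (\<lambda>T. uu T a)" for a
    unfolding uu_def by (intro continuous_on_sum continuous_on_mult bb1 cc1 comp)
  have vv: "continuous_on UNIV (\<lambda>T. vv T a)" for a
    unfolding vv_def by (rule comp)
  show ?thesis unfolding DD_def[abs_def] by (intro continuous_on_diff continuous_on_mult uu vv)
qed

theorem corollary4p14:
  shows "{r. typical_subrank TYPE(real^4^4^3) r} = {2, 3}"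
proof (intro set_eqI iffI)
  fix r assume "r \<in> {r. typical_subrank TYPE(real^4^4^3) r}"
  then obtain S :: "(real^4^4^3) set" where S: "open S" "S \<noteq> {}" "\<forall>T\<in>S. subrank T = r"
    unfolding typical_subrank_def by blast
  obtain T0 where T0: "T0 \<in> S" using S(2) by blast
  obtain e where e: "e > 0" "ball T0 e \<subseteq> S" using S(1) T0 open_contains_ball by blast
  obtain T' where T': "dist T' T0 < e" "DD T' \<noteq> 0" using DD_dense[OF e(1)] by blast
  have "T' \<in> S" using T'(1) e(2) by (auto simp: dist_commute)
  then have "2 \<le> r" using S(3) subrank_ge2[OF T'(2)] by auto
  moreover have "r \<le> 3" using S(3) T0 subrank_props(1)[of T0] by auto
  ultimately show "r \<in> {2, 3}" by auto
next
  fix r :: nat assume "r \<in> {2, 3}"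
  then consider "r = 2" | "r = 3" by auto
  then show "r \<in> {r. typical_subrank TYPE(real^4^4^3) r}"
  proof cases
    case 1
    define S :: "(real^4^4^3) set" where "S = ball TQ 1 \<inter> {T. DD T \<noteq> 0}"
    have "open S" unfolding S_def
      by (intro open_Int open_ball open_Collect_neq DD_cont continuous_on_const)
    moreover have "T1 \<in> S" using T1_near DD_T1 by (simp add: S_def dist_norm norm_minus_commute)
    moreover have "\<forall>T\<in>S. subrank T = 2"
    proof
      fix T assume "T \<in> S"
      then have "DD T \<noteq> 0" "norm (T - TQ) < 1" by (auto simp: S_def dist_norm norm_minus_commute)
      then show "subrank T = 2" using subrank_ge2 subrank_le2 by (simp add: le_antisym)
    qed
    ultimately show ?thesis using 1 unfolding typical_subrank_def by blast
  next
    case 2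
    obtain S :: "(real^4^4^3) set" where "open S" "S \<noteq> {}" "\<forall>T\<in>S. restricts_to_unit 3 T"
      using open_restricts3 by blast
    then show ?thesis using 2 subrank_eq3 unfolding typical_subrank_def by auto
  qed
qed

end
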